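(* For $0<\alpha\le 1$, integers $n,m\ge 0$ and $\delta\in(0,1)$, define $$c_\alpha(n,m,\delta)=\frac{\int_0^\delta \theta^{\alpha m}(1-\theta^\alpha)^n\,\mathrm{d}\theta}{\int_0^1 \theta^{\alpha m}(1-\theta^\alpha)^n\,\mathrm{d}\theta}.$$ Let $\varphi(\theta)=\theta^\alpha$ and $\psi(\theta)=\theta^\beta$ with $1\ge\alpha>\beta>0$. Then $\varphi(\theta)\le\psi(\theta)$ for all $\theta\in[0,1]$, and $c_\alpha(n,m,\delta)\le c_\beta(n,m,\delta)$ for all $n,m\in\mathbb{N}$ and all $\delta\in(0,1)$.
   Context: Interpretation: $\varphi(\theta)$ is the "effectiveness function" of a sampling method, i.e. the probability that one sample is negative when the true error probability is $\theta$; $c_\alpha(n,m,\delta)$ (written $c_\varphi$ in the paper) is the posterior probability, under a uniform prior on $\theta\in[0,1]$, that $\theta<\delta$ after observing $m$ negative and $n$ positive samples produced by a method with effectiveness $\theta^\alpha$. $\mathbb{N}$ includes $0$. *)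

theory Defs
  imports "HOL-Analysis.Analysis"
begin

definition eff :: "real \<Rightarrow> real \<Rightarrow> real" where
  "eff \<alpha> \<theta> = \<theta> powr \<alpha>"

definition c_post :: "real \<Rightarrow> nat \<Rightarrow> nat \<Rightarrow> real \<Rightarrow> real" where
  "c_post \<alpha> n m \<delta> =
     (LBINT \<theta>=0..\<delta>. (eff \<alpha> \<theta>) ^ m * (1 - eff \<alpha> \<theta>) ^ n) /
     (LBINT \<theta>=0..1. (eff \<alpha> \<theta>) ^ m * (1 - eff \<alpha> \<theta>) ^ n)"

end

theory Submission
  imports Defs
begin

lemma abstract_mlr:
  fixes f g :: "real \<Rightarrow> real" and d :: real
  assumes cf: "continuous_on {0..1} f" and cg: "continuous_on {0..1} g"
    and d: "0 < d" "d < 1"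
    and fnn: "\<And>x. 0 \<le> x \<Longrightarrow> x \<le> 1 \<Longrightarrow> 0 \<le> f x"
    and gnn: "\<And>x. 0 \<le> x \<Longrightarrow> x \<le> 1 \<Longrightarrow> 0 \<le> g x"
    and gd: "0 < g d"
    and mlr: "\<And>x y. 0 \<le> x \<Longrightarrow> x \<le> y \<Longrightarrow> y \<le> 1 \<Longrightarrow> f x * g y \<le> f y * g x"
  shows "integral {0..d} f / integral {0..1} f \<le> integral {0..d} g / integral {0..1} g"
proof -
  have if1: "f integrable_on {0..1}" using cf integrable_continuous_interval by blast
  have ig1: "g integrable_on {0..1}" using cg integrable_continuous_interval by blast
  have ifa: "f integrable_on {0..d}" using cf d
    by (meson integrable_continuous_interval continuous_on_subset atLeastatMost_subset_iff order.refl less_imp_le)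
  have iga: "g integrable_on {0..d}" using cg d
    by (meson integrable_continuous_interval continuous_on_subset atLeastatMost_subset_iff order.refl less_imp_le)
  have ifb: "f integrable_on {d..1}" using cf d
    by (meson integrable_continuous_interval continuous_on_subset atLeastatMost_subset_iff order.refl less_imp_le)
  have igb: "g integrable_on {d..1}" using cg d
    by (meson integrable_continuous_interval continuous_on_subset atLeastatMost_subset_iff order.refl less_imp_le)
  define F where "F = integral {0..d} f"
  define G where "G = integral {0..d} g"
  define F2 where "F2 = integral {d..1} f"
  define G2 where "G2 = integral {d..1} g"
  have F1: "integral {0..1} f = F + F2" unfolding F_def F2_def
    using Henstock_Kurzweil_Integration.integral_combine[where c=d, OF _ _ if1] d if1 by simp
  have G1: "integral {0..1} g = G + G2" unfolding G_def G2_def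
    using Henstock_Kurzweil_Integration.integral_combine[where c=d, OF _ _ ig1] d ig1 by simp
  have Fnn: "0 \<le> F" unfolding F_def using ifa fnn d by (intro integral_nonneg) auto
  have F2nn: "0 \<le> F2" unfolding F2_def using ifb fnn d by (intro integral_nonneg) auto
  have Gnn: "0 \<le> G" unfolding G_def using iga gnn d by (intro integral_nonneg) auto
  have G2nn: "0 \<le> G2" unfolding G2_def using igb gnn d by (intro integral_nonneg) auto
  have A: "F * g d \<le> f d * G"
  proof -
    have "F * g d = integral {0..d} (\<lambda>x. f x * g d)" unfolding F_def by simp
    also have "\<dots> \<le> integral {0..d} (\<lambda>x. f d * g x)"
      using ifa iga d by (intro integral_le) (auto intro: integrable_on_mult_left integrable_on_mult_right mlr)
    also have "\<dots> = f d * G" unfolding G_def by simp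
    finally show ?thesis .
  qed
  have B: "f d * G2 \<le> g d * F2"
  proof -
    have "f d * G2 = integral {d..1} (\<lambda>y. f d * g y)" unfolding G2_def by simp
    also have "\<dots> \<le> integral {d..1} (\<lambda>y. f y * g d)"
      using ifb igb d by (intro integral_le) (auto intro: integrable_on_mult_left integrable_on_mult_right mlr)
    also have "\<dots> = g d * F2" unfolding F2_def by (simp add: mult.commute)
    finally show ?thesis .
  qed
  have C: "F * G2 \<le> G * F2"
  proof -
    have "g d * (F * G2) = (F * g d) * G2" by simp
    also have "\<dots> \<le> (f d * G) * G2" using A G2nn by (rule mult_right_mono)
    also have "\<dots> = G * (f d * G2)" by simp
    also have "\<dots> \<le> G * (g d * F2)" using B Gnn by (rule mult_left_mono)
    also have "\<dots> = g d * (G * F2)" by simp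
    finally show ?thesis using gd by simp
  qed
  show ?thesis
  proof (cases "F + F2 = 0")
    case True
    then show ?thesis using Gnn G2nn F1 G1 by (simp add: F_def[symmetric] G_def[symmetric])
  next
    case False
    then have Fp: "F + F2 > 0" using Fnn F2nn by simp
    show ?thesis
    proof (cases "G + G2 = 0")
      case True
      then have "G = 0" using Gnn G2nn by simp
      then have "F = 0" using A gd Fnn by (simp add: mult_le_0_iff)
      then show ?thesis using F1 G1 Gnn G2nn by (simp add: F_def[symmetric] G_def[symmetric])
    next
      case False
      then have Gp: "G + G2 > 0" using Gnn G2nn by simp
      have "F / (F + F2) \<le> G / (G + G2)" using Fp Gp C
        by (simp add: divide_simps algebra_simps)
      then show ?thesis using F1 G1 by (simp add: F_def[symmetric] G_def[symmetric])
    qed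
  qed
qed

lemma powr_le1: "0 \<le> (x::real) \<Longrightarrow> x \<le> 1 \<Longrightarrow> 0 \<le> a \<Longrightarrow> x powr a \<le> 1"
  using powr_mono2[of a x 1] by simp

lemma secant:
  fixes s t r :: real
  assumes "0 \<le> s" "s \<le> t" "t \<le> 1" "1 \<le> r"
  shows "(1 - s powr r) * (1 - t) \<le> (1 - t powr r) * (1 - s)"
proof -
  consider "s = 0" | "t = 1" | "0 < s" "t < 1" using assms by linarith
  then show ?thesis
  proof cases
    case 1
    then show ?thesis
    proof (cases "t = 0")
      case True with 1 show ?thesis by simp
    next
      case False
      then have "t powr r \<le> t" using assms powr_le_one_le[of t r] by simp
      with 1 show ?thesis by simp
    qed
  next
    case 2 then show ?thesis by simp
  next
    case 3
    have s1: "s < 1" using 3 assms by simp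
    define l where "l = (t - s) / (1 - s)"
    have l0: "0 \<le> l" "l \<le> 1" unfolding l_def using assms s1 by (auto simp: divide_simps)
    have cv: "convex_on {0<..} (\<lambda>x. x powr r)" using powr_convex assms by simp
    have "(\<lambda>x. x powr r) ((1 - l) *\<^sub>R s + l *\<^sub>R 1) \<le> (1 - l) * s powr r + l * 1 powr r"
      using convex_onD[OF cv, of l s 1] l0 3 by simp
    moreover have "(1 - l) *\<^sub>R s + l *\<^sub>R 1 = t"
    proof -
      have "l * (1 - s) = t - s" unfolding l_def using s1 by simp
      moreover have "(1 - l) * s + l = s + l * (1 - s)" by (simp add: algebra_simps)
      ultimately show ?thesis by simp
    qed
    ultimately have "t powr r \<le> (1 - l) * s powr r + l" by simp
    then have "(1 - l) * (1 - s powr r) \<le> 1 - t powr r" by (simp add: algebra_simps)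
    moreover have "1 - l = (1 - t) / (1 - s)" unfolding l_def using s1 by (simp add: field_simps)
    ultimately have "(1 - t) / (1 - s) * (1 - s powr r) \<le> 1 - t powr r" by simp
    then show ?thesis using s1 by (simp add: divide_simps mult.commute)
  qed
qed

lemma npart:
  fixes x y a b :: real
  assumes "0 \<le> x" "x \<le> y" "y \<le> 1" "0 < b" "b < a"
  shows "(1 - x powr a) * (1 - y powr b) \<le> (1 - y powr a) * (1 - x powr b)"
proof -
  have e: "z powr a = (z powr b) powr (a / b)" for z using assms by (simp add: powr_powr)
  have "x powr b \<le> y powr b" using assms by (intro powr_mono2) auto
  moreover have "y powr b \<le> 1" using assms by (intro powr_le1) auto
  ultimately show ?thesis unfolding e[of x] e[of y]
    using assms by (intro secant) auto
qed

lemma mpart: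
  fixes x y a b :: real
  assumes "0 \<le> x" "x \<le> y" "y \<le> 1" "0 < b" "b < a"
  shows "x powr a * y powr b \<le> y powr a * x powr b"
proof (cases "x = 0")
  case True then show ?thesis using assms by simp
next
  case False
  then have xp: "x > 0" using assms by simp
  have "x powr a = x powr b * x powr (a - b)" by (simp flip: powr_add)
  moreover have "y powr a = y powr b * y powr (a - b)" by (simp flip: powr_add)
  moreover have "x powr (a - b) \<le> y powr (a - b)" using assms by (intro powr_mono2) auto
  moreover have "x powr (a-b) * (x powr b * y powr b) \<le> y powr (a-b) * (x powr b * y powr b)"
    using calculation(3) by (intro mult_right_mono) auto
  ultimately show ?thesis
    by (simp add: mult_ac)
qed

lemma fullpart:
  fixes x y a b :: real
  assumes "0 \<le> x" "x \<le> y" "y \<le> 1" "0 < b" "b < a"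
  shows "((x powr a) ^ m * (1 - x powr a) ^ n) * ((y powr b) ^ m * (1 - y powr b) ^ n)
       \<le> ((y powr a) ^ m * (1 - y powr a) ^ n) * ((x powr b) ^ m * (1 - x powr b) ^ n)"
proof -
  have y1: "x \<le> 1" using assms by simp
  have nn: "0 \<le> 1 - z powr c" if "0 \<le> z" "z \<le> 1" "0 \<le> c" for z c :: real
    using powr_le1[OF that] by simp
  have m: "(x powr a * y powr b) ^ m \<le> (y powr a * x powr b) ^ m"
    using mpart[OF assms] assms by (intro power_mono) auto
  have n: "((1 - x powr a) * (1 - y powr b)) ^ n \<le> ((1 - y powr a) * (1 - x powr b)) ^ n"
    using npart[OF assms] assms y1 by (intro power_mono mult_nonneg_nonneg nn) auto
  have "((x powr a) ^ m * (1 - x powr a) ^ n) * ((y powr b) ^ m * (1 - y powr b) ^ n)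
      = (x powr a * y powr b) ^ m * ((1 - x powr a) * (1 - y powr b)) ^ n"
    by (simp add: power_mult_distrib)
  also have "\<dots> \<le> (y powr a * x powr b) ^ m * ((1 - y powr a) * (1 - x powr b)) ^ n"
    using m n assms y1 by (intro mult_mono zero_le_power mult_nonneg_nonneg nn) auto
  also have "\<dots> = ((y powr a) ^ m * (1 - y powr a) ^ n) * ((x powr b) ^ m * (1 - x powr b) ^ n)"
    by (simp add: power_mult_distrib)
  finally show ?thesis .
qed

lemma cont_f: "0 < a \<Longrightarrow> continuous_on {0..1} (\<lambda>t::real. (t powr a) ^ m * (1 - t powr a) ^ n)"
  by (intro continuous_intros continuous_on_powr') auto

theorem theorem1:
  fixes \<alpha> \<beta> :: real
  assumes "\<alpha> \<le> 1" and "\<beta> < \<alpha>" and "0 < \<beta>"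
  shows "(\<forall>\<theta>\<in>{0..1}. eff \<alpha> \<theta> \<le> eff \<beta> \<theta>) \<and>
         (\<forall>(n::nat) (m::nat) (\<delta>::real). 0 < \<delta> \<and> \<delta> < 1 \<longrightarrow>
            c_post \<alpha> n m \<delta> \<le> c_post \<beta> n m \<delta>)"
proof (intro conjI allI impI ballI)
  fix t :: real assume "t \<in> {0..1}"
  then show "eff \<alpha> t \<le> eff \<beta> t" unfolding eff_def using assms
    by (intro powr_mono') auto
next
  fix n m :: nat and d :: real
  assume d: "0 < d \<and> d < 1"
  define f where "f = (\<lambda>a t::real. (t powr a) ^ m * (1 - t powr a) ^ n)"
  have ap: "0 < \<alpha>" using assms by simp
  have L: "(LBINT t=0..c. f a t) = integral {0..c} (f a)" if "0 < a" "0 \<le> c" "c \<le> 1" for a c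
  proof -
    have "continuous_on {0..c} (f a)" unfolding f_def
      by (rule continuous_on_subset[OF cont_f[OF \<open>0 < a\<close>]]) (use that in auto)
    then have "set_integrable lborel {0..c} (f a)" by (rule borel_integrable_atLeastAtMost')
    then show ?thesis using that interval_integral_eq_integral[of 0 c "f a"]
      by (simp add: zero_ereal_def)
  qed
  have "c_post a n m c = integral {0..c} (f a) / integral {0..1} (f a)" if "0 < a" "0 \<le> c" "c \<le> 1" for a c
    unfolding c_post_def eff_def using L[OF that] L[OF \<open>0 < a\<close>, of 1]
    by (simp add: f_def one_ereal_def)
  then have E: "c_post \<alpha> n m d = integral {0..d} (f \<alpha>) / integral {0..1} (f \<alpha>)"
    "c_post \<beta> n m d = integral {0..d} (f \<beta>) / integral {0..1} (f \<beta>)"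
    using ap assms d by auto
  have nn: "0 \<le> f a x" if "0 < a" "0 \<le> x" "x \<le> 1" for a x
    unfolding f_def using powr_le1[of x a] that by simp
  have gd: "0 < f \<beta> d" unfolding f_def using d assms
    using powr_less_mono2[of \<beta> d 1] by simp
  show "c_post \<alpha> n m d \<le> c_post \<beta> n m d" unfolding E
    apply (rule abstract_mlr)
    using cont_f[OF ap] cont_f[OF \<open>0 < \<beta>\<close>] d nn ap assms gd
    by (auto simp: f_def intro: fullpart)
qed

end
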